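(* For every field $\mathbb{K}$, $\mathcal{G}+\mathcal{G}=\mathbb{K}((t^{-1}))$.
   Context: $\mathbb{K}((t^{-1}))$ is the field of formal Laurent series $\sum_{n=-\infty}^{\infty}\alpha_n t^{-n}$ over the field $\mathbb{K}$ (only finitely many nonzero $\alpha_n$ with $n<0$), with $\deg\alpha=\sup\{-n:\alpha_n\ne0\}$. Every $\alpha$ has a unique continued fraction expansion $[a_0;a_1,a_2,\dots]$ with $a_n\in\mathbb{K}[t]$, $\deg a_n\ge1$ for $n\ge1$, finite iff $\alpha\in\mathbb{K}(t)$. $a_n(\alpha)$ is the $n$-th partial quotient and $d_n(\alpha)=\deg a_n(\alpha)$. $\mathcal{G}=\{\alpha\in\mathbb{K}((t^{-1})):d_n(\alpha)\to\infty\}\cup\mathbb{K}(t)$. *)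

theory Defs
  imports "HOL-Computational_Algebra.Formal_Laurent_Series"
begin

text \<open>We model K((t^{-1})) as the type 'a fls of formal Laurent series in X,
where X plays the role of t^{-1}: the series sum of a_n t^{-n} is the fls with
coefficient a_n at index n (finitely many nonzero with n < 0).\<close>

definition tdeg :: "'a::field fls \<Rightarrow> int" where
  "tdeg \<alpha> = - fls_subdegree \<alpha>"

definition tpoly :: "'a::field poly \<Rightarrow> 'a fls" where
  "tpoly p = poly (map_poly fls_const p) fls_X_inv"

definition ratfuns :: "'a::field fls set" where
  "ratfuns = {tpoly p / tpoly q | p q. q \<noteq> 0}"

definition frac_part :: "'a::field fls \<Rightarrow> 'a fls" where
  "frac_part \<alpha> = fps_to_fls (fls_regpart \<alpha>) - fls_const (fls_nth \<alpha> 0)"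

definition poly_part :: "'a::field fls \<Rightarrow> 'a fls" where
  "poly_part \<alpha> = \<alpha> - frac_part \<alpha>"

fun cq :: "'a::field fls \<Rightarrow> nat \<Rightarrow> 'a fls" where
  "cq \<alpha> 0 = \<alpha>"
| "cq \<alpha> (Suc n) = inverse (frac_part (cq \<alpha> n))"

text \<open>Partial quotients a_n(alpha) and their degrees d_n(alpha)
 (meaningful for all n when the expansion is infinite).\<close>
definition pq :: "'a::field fls \<Rightarrow> nat \<Rightarrow> 'a fls" where
  "pq \<alpha> n = poly_part (cq \<alpha> n)"

definition pqdeg :: "'a::field fls \<Rightarrow> nat \<Rightarrow> int" where
  "pqdeg \<alpha> n = tdeg (pq \<alpha> n)"

definition Gset :: "'a::field fls set" where
  "Gset = {\<alpha>. filterlim (\<lambda>n. pqdeg \<alpha> n) at_top sequentially} \<union> ratfuns"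

end

theory Submission
  imports Defs
begin
unbundle fps_syntax

lemma frac_nth: "frac_part x $$ i = (if i \<ge> 1 then x $$ i else 0)"
  unfolding frac_part_def by auto

lemma poly_part_nth: "poly_part x $$ i = (if i \<le> 0 then x $$ i else 0)"
  unfolding poly_part_def by (simp add: frac_nth)

lemma frac_poly_part [simp]: "frac_part (poly_part x) = 0"
  by (rule fls_eqI) (simp add: frac_nth poly_part_nth)

lemma poly_plus_frac: "poly_part x + frac_part x = x"
  unfolding poly_part_def by simp

lemma frac_sub_ge1:
  assumes "frac_part x \<noteq> 0" shows "1 \<le> fls_subdegree (frac_part x)"
  by (rule fls_subdegree_geI[OF assms]) (simp add: frac_nth)

subsection \<open>Polynomial embedding and rational functions\<close>

lemma tpoly_pCons: "tpoly (pCons c p) = fls_const c + fls_X_inv * tpoly p"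
  unfolding tpoly_def by (simp add: map_poly_pCons)

lemma tpoly_0 [simp]: "tpoly 0 = 0"
  unfolding tpoly_def by simp

lemma tpoly_nth: "tpoly p $$ k = (if k \<le> 0 then coeff p (nat (-k)) else 0)"
proof (induction p arbitrary: k rule: pCons_induct)
  case 0
  then show ?case by simp
next
  case (pCons c p)
  have "tpoly (pCons c p) $$ k = (if k = 0 then c else 0) + tpoly p $$ (k+1)"
    by (simp add: tpoly_pCons fls_X_inv_times_conv_shift)
  also have "\<dots> = (if k \<le> 0 then coeff (pCons c p) (nat (-k)) else 0)"
  proof (cases "k < 0")
    case True
    then have "nat (-k) = Suc (nat (-(k+1)))" by simp
    then show ?thesis using True pCons.IH[of "k+1"] by simp
  next
    case False
    then show ?thesis using pCons.IH[of "k+1"] by auto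
  qed
  finally show ?case .
qed

lemma tpoly_add: "tpoly (p + q) = tpoly p + tpoly q"
  by (rule fls_eqI) (simp add: tpoly_nth)

lemma tpoly_uminus: "tpoly (- p) = - tpoly p"
  by (rule fls_eqI) (simp add: tpoly_nth)

lemma tpoly_smult: "tpoly (smult c p) = fls_const c * tpoly p"
  by (rule fls_eqI) (simp add: tpoly_nth)

lemma tpoly_mult: "tpoly (p * q) = tpoly p * tpoly q"
proof (induction p rule: pCons_induct)
  case 0
  then show ?case by simp
next
  case (pCons c p)
  have "tpoly (pCons c p * q) = tpoly (smult c q) + tpoly (pCons 0 (p * q))"
    by (simp add: tpoly_add)
  also have "\<dots> = fls_const c * tpoly q + fls_X_inv * (tpoly p * tpoly q)"
    by (simp add: tpoly_smult tpoly_pCons pCons.IH)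
  also have "\<dots> = tpoly (pCons c p) * tpoly q"
    by (simp add: tpoly_pCons algebra_simps)
  finally show ?case .
qed

lemma tpoly_1 [simp]: "tpoly 1 = 1"
  by (rule fls_eqI) (auto simp: tpoly_nth)

lemma tpoly_eq0: "tpoly p = 0 \<Longrightarrow> p = 0"
proof (rule poly_eqI)
  fix n assume "tpoly p = 0"
  then have "tpoly p $$ (- int n) = 0" by simp
  then show "coeff p n = coeff 0 n" by (simp add: tpoly_nth)
qed

lemma ratfunsI: "q \<noteq> 0 \<Longrightarrow> x = tpoly p / tpoly q \<Longrightarrow> x \<in> ratfuns"
  unfolding ratfuns_def by blast

lemma ratfunsE:
  assumes "x \<in> ratfuns"
  obtains p q where "q \<noteq> 0" "tpoly q \<noteq> 0" "x = tpoly p / tpoly q"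
  using assms tpoly_eq0 unfolding ratfuns_def by blast

lemma R_zero: "0 \<in> ratfuns"
  by (rule ratfunsI[of 1 _ 0]) simp_all

lemma R_add: assumes "x \<in> ratfuns" "y \<in> ratfuns" shows "x + y \<in> ratfuns"
proof -
  obtain p1 q1 where 1: "q1 \<noteq> 0" "tpoly q1 \<noteq> 0" "x = tpoly p1 / tpoly q1"
    using assms(1) by (rule ratfunsE)
  obtain p2 q2 where 2: "q2 \<noteq> 0" "tpoly q2 \<noteq> 0" "y = tpoly p2 / tpoly q2"
    using assms(2) by (rule ratfunsE)
  have "x + y = tpoly (p1 * q2 + p2 * q1) / tpoly (q1 * q2)"
    using 1 2 by (simp add: tpoly_add tpoly_mult field_simps)
  then show ?thesis using 1 2 by (intro ratfunsI[of "q1*q2"]) auto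
qed

lemma R_uminus: assumes "x \<in> ratfuns" shows "- x \<in> ratfuns"
proof -
  obtain p1 q1 where 1: "q1 \<noteq> 0" "tpoly q1 \<noteq> 0" "x = tpoly p1 / tpoly q1"
    using assms(1) by (rule ratfunsE)
  have "- x = tpoly (- p1) / tpoly q1" using 1 by (simp add: tpoly_uminus)
  then show ?thesis using 1 by (intro ratfunsI[of "q1"]) auto
qed

lemma R_diff: "x \<in> ratfuns \<Longrightarrow> y \<in> ratfuns \<Longrightarrow> x - y \<in> ratfuns"
  using R_add[of x "- y"] R_uminus[of y] by simp

lemma R_inverse: assumes "x \<in> ratfuns" shows "inverse x \<in> ratfuns"
proof -
  obtain p1 q1 where 1: "q1 \<noteq> 0" "tpoly q1 \<noteq> 0" "x = tpoly p1 / tpoly q1"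
    using assms(1) by (rule ratfunsE)
  show ?thesis
  proof (cases "p1 = 0")
    case True
    then show ?thesis using 1 R_zero by simp
  next
    case False
    then have "tpoly p1 \<noteq> 0" using tpoly_eq0 by blast
    then have "inverse x = tpoly q1 / tpoly p1" using 1 by simp
    then show ?thesis using False by (intro ratfunsI[of p1]) auto
  qed
qed

lemma R_poly_part: "poly_part z \<in> ratfuns"
proof -
  define L where "L = nat (- fls_subdegree z) + 1"
  define p where "p = Poly (map (\<lambda>n. z $$ (- int n)) [0..<L])"
  have "tpoly p = poly_part z"
  proof (rule fls_eqI)
    fix k
    show "tpoly p $$ k = poly_part z $$ k"
    proof (cases "k \<le> 0")
      case True
      show ?thesis
      proof (cases "nat (-k) < L")
        case True
        then show ?thesis using \<open>k \<le> 0\<close>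
          by (simp add: tpoly_nth poly_part_nth p_def nth_default_def)
      next
        case False
        then have "k < fls_subdegree z" unfolding L_def by linarith
        then show ?thesis using \<open>k \<le> 0\<close> False
          by (simp add: tpoly_nth poly_part_nth p_def nth_default_def)
      qed
    next
      case False
      then show ?thesis by (simp add: tpoly_nth poly_part_nth)
    qed
  qed
  then show ?thesis by (intro ratfunsI[of 1 _ p]) auto
qed


definition Tm :: "'a::field fls \<Rightarrow> 'a fls" where "Tm x = inverse (frac_part x)"

lemma cq_Suc_Tm: "cq z (Suc n) = Tm (cq z n)"
  by (simp add: Tm_def)

lemma cq_Suc': "cq z (Suc n) = cq (Tm z) n"
  by (induction n) (simp_all add: Tm_def)

definition sig :: "'a::field fls \<Rightarrow> nat \<Rightarrow> int" where
  "sig z j = fls_subdegree (frac_part (cq z j))"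

definition SS :: "'a::field fls \<Rightarrow> nat \<Rightarrow> int" where
  "SS z n = 2 * (\<Sum>j<n. sig z j)"

definition agree :: "int \<Rightarrow> 'a::field fls \<Rightarrow> 'a fls \<Rightarrow> bool" where
  "agree N x y \<longleftrightarrow> (\<forall>i\<le>N. x $$ i = y $$ i)"

definition irr :: "'a::field fls \<Rightarrow> bool" where
  "irr z \<longleftrightarrow> (\<forall>j. frac_part (cq z j) \<noteq> 0)"

lemma SS_Suc: "SS z (Suc n) = SS z n + 2 * sig z n"
  by (simp add: SS_def algebra_simps)

lemma sig_Tm: "sig (Tm z) j = sig z (Suc j)"
  by (simp only: sig_def cq_Suc')

lemma SS_Suc': "SS z (Suc n) = 2 * sig z 0 + SS (Tm z) n"
  unfolding SS_def sum.lessThan_Suc_shift by (simp add: sig_Tm algebra_simps)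

lemma irr_Tm: "irr z \<Longrightarrow> irr (Tm z)"
  unfolding irr_def by (metis cq_Suc')

lemma sig_pos: "irr z \<Longrightarrow> 1 \<le> sig z j"
  unfolding irr_def sig_def using frac_sub_ge1 by blast

lemma SS_nonneg: "irr z \<Longrightarrow> 0 \<le> SS z n"
proof -
  assume "irr z"
  have "0 \<le> (\<Sum>j<n. sig z j)" using sig_pos[OF \<open>irr z\<close>] by (smt (verit) sum_nonneg)
  then show ?thesis by (simp add: SS_def)
qed

lemma SS_mono: "irr z \<Longrightarrow> j \<le> n \<Longrightarrow> SS z j \<le> SS z n"
proof (induction n)
  case 0 then show ?case by simp
next
  case (Suc n)
  then show ?case using sig_pos[of z n] SS_Suc[of z n] by (cases "j = Suc n") auto
qed

lemma cond_lt: "irr z \<Longrightarrow> j < n \<Longrightarrow> SS z j + sig z j \<le> SS z n - 1"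
  using SS_mono[of z "Suc j" n] SS_Suc[of z j] sig_pos[of z j] by simp

lemma agree_mono: "agree N x y \<Longrightarrow> M \<le> N \<Longrightarrow> agree M x y"
  unfolding agree_def by auto

lemma agree_sym: "agree N x y \<Longrightarrow> agree N y x"
  unfolding agree_def by auto

lemma agree_trans: "agree N x y \<Longrightarrow> agree N y z \<Longrightarrow> agree N x z"
  unfolding agree_def by auto

lemma agree_diff: "agree N x y \<Longrightarrow> x' - y' = x - y \<Longrightarrow> agree N x' y'"
  unfolding agree_def
proof safe
  fix i assume "\<forall>i\<le>N. x $$ i = y $$ i" "x' - y' = x - y" "i \<le> N"
  then have "(x' - y') $$ i = (x - y) $$ i" by simp
  then show "x' $$ i = y' $$ i" using \<open>\<forall>i\<le>N. x $$ i = y $$ i\<close> \<open>i \<le> N\<close> by simp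
qed

lemma agree_add_sum:
  assumes "agree N a 0" "agree M b 0" shows "agree (min N M) (a + b) 0"
  using assms unfolding agree_def by auto

lemma agree_0_iff: "agree N x y \<longleftrightarrow> agree N (x - y) 0"
  unfolding agree_def by auto

lemma agree_same_subdeg:
  assumes "u \<noteq> 0" "fls_subdegree u = a" "agree N u v" "a \<le> N"
  shows "v \<noteq> 0" "fls_subdegree v = a"
proof -
  have "v $$ a \<noteq> 0" using assms unfolding agree_def by (metis nth_fls_subdegree_nonzero order_refl)
  then show "v \<noteq> 0" by (rule fls_nonzeroI)
  have "\<And>k. k < a \<Longrightarrow> v $$ k = 0" using assms unfolding agree_def
    by (metis fls_eq0_below_subdegree less_le_not_le order.trans)
  then show "fls_subdegree v = a" using \<open>v $$ a \<noteq> 0\<close> by (rule fls_subdegree_eqI[rotated])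
qed

lemma agree_inverse:
  fixes u v :: "'a::field fls"
  assumes "u \<noteq> 0" "fls_subdegree u = a" "agree N u v" "a \<le> N"
  shows "agree (N - 2 * a) (inverse u) (inverse v)"
proof -
  have v: "v \<noteq> 0" "fls_subdegree v = a" using agree_same_subdeg[OF assms] by auto
  show ?thesis
  proof (cases "u = v")
    case True then show ?thesis by (simp add: agree_def)
  next
    case False
    have d: "v - u \<noteq> 0" using False by simp
    have "\<And>k. k < N + 1 \<Longrightarrow> (v - u) $$ k = 0" using assms(3) unfolding agree_def by simp
    then have sd: "N + 1 \<le> fls_subdegree (v - u)" by (rule fls_subdegree_geI[OF d])
    have eq: "inverse u - inverse v = (v - u) * (inverse u * inverse v)"
      using assms(1) v(1) by (simp add: field_simps)
    have "fls_subdegree ((v - u) * (inverse u * inverse v)) = fls_subdegree (v - u) - 2 * a"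
      using d assms(1,2) v by simp
    then have "\<And>i. i \<le> N - 2 * a \<Longrightarrow> (inverse u - inverse v) $$ i = 0"
      using sd unfolding eq by (intro fls_eq0_below_subdegree) linarith
    then show ?thesis unfolding agree_def by simp
  qed
qed

lemma L1:
  fixes x y :: "'a::field fls"
  assumes "frac_part x \<noteq> 0" "fls_subdegree (frac_part x) = s" "s \<le> N" "agree N x y"
  shows "frac_part y \<noteq> 0" "fls_subdegree (frac_part y) = s" "agree (N - 2 * s) (Tm x) (Tm y)"
proof -
  have a: "agree N (frac_part x) (frac_part y)" using assms(4) unfolding agree_def by (simp add: frac_nth)
  show "frac_part y \<noteq> 0" "fls_subdegree (frac_part y) = s"
    using agree_same_subdeg[OF assms(1,2) a assms(3)] by auto
  show "agree (N - 2 * s) (Tm x) (Tm y)"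
    unfolding Tm_def by (rule agree_inverse[OF assms(1,2) a assms(3)])
qed

lemma fwd:
  fixes z y :: "'a::field fls"
  assumes "agree N z y" "\<forall>j<n. frac_part (cq z j) \<noteq> 0 \<and> SS z j + sig z j \<le> N"
  shows "(\<forall>j<n. frac_part (cq y j) \<noteq> 0 \<and> sig y j = sig z j) \<and> agree (N - SS z n) (cq z n) (cq y n)"
  using assms(2)
proof (induction n)
  case 0
  then show ?case using assms(1) by (simp add: SS_def)
next
  case (Suc n)
  then have IH: "\<forall>j<n. frac_part (cq y j) \<noteq> 0 \<and> sig y j = sig z j"
    "agree (N - SS z n) (cq z n) (cq y n)" by auto
  have c: "frac_part (cq z n) \<noteq> 0" "SS z n + sig z n \<le> N" using Suc.prems by auto
  have l: "frac_part (cq y n) \<noteq> 0" "fls_subdegree (frac_part (cq y n)) = sig z n"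
    "agree (N - SS z n - 2 * sig z n) (Tm (cq z n)) (Tm (cq y n))"
    using L1[OF c(1) sig_def[symmetric], of "N - SS z n" "cq y n"] c IH(2) by auto
  show ?case
  proof (intro conjI allI impI)
    fix j assume "j < Suc n"
    then show "frac_part (cq y j) \<noteq> 0" "sig y j = sig z j"
      using IH l by (auto simp: less_Suc_eq sig_def)
  next
    show "agree (N - SS z (Suc n)) (cq z (Suc n)) (cq y (Suc n))"
      using l(3) unfolding cq_Suc_Tm SS_Suc by (simp add: algebra_simps)
  qed
qed

fun conv :: "'a::field fls \<Rightarrow> nat \<Rightarrow> 'a fls" where
  "conv z 0 = poly_part z"
| "conv z (Suc n) = poly_part z + inverse (conv (Tm z) n)"

lemma Tm_ne0: "irr z \<Longrightarrow> Tm z \<noteq> 0"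
  unfolding irr_def Tm_def by (metis cq.simps(1) inverse_zero_imp_zero)

lemma Tm_subdeg: "fls_subdegree (Tm z) = - sig z 0"
  unfolding Tm_def sig_def by simp

lemma SC: "irr z \<Longrightarrow> agree (SS z n + sig z n - 1) z (conv z n)"
proof (induction n arbitrary: z)
  case 0
  show ?case unfolding agree_def
  proof safe
    fix i assume i: "i \<le> SS z 0 + sig z 0 - 1"
    show "z $$ i = conv z 0 $$ i"
    proof (cases "i \<le> 0")
      case True then show ?thesis by (simp add: poly_part_nth)
    next
      case False
      then have "frac_part z $$ i = 0" using i by (intro fls_eq0_below_subdegree) (simp add: SS_def sig_def)
      then show ?thesis using False by (simp add: poly_part_nth frac_nth)
    qed
  qed
next
  case (Suc n)
  have irT: "irr (Tm z)" using Suc.prems by (rule irr_Tm)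
  define M where "M = SS (Tm z) n + sig (Tm z) n - 1"
  have a: "agree M (Tm z) (conv (Tm z) n)" using Suc.IH[OF irT] by (simp add: M_def)
  have M0: "0 \<le> M" using SS_nonneg[OF irT, of n] sig_pos[OF irT, of n] by (simp add: M_def)
  have b: "agree (M - 2 * (- sig z 0)) (inverse (Tm z)) (inverse (conv (Tm z) n))"
    using agree_inverse[OF Tm_ne0[OF Suc.prems] Tm_subdeg a] M0 sig_pos[OF Suc.prems, of 0] by simp
  have e1: "inverse (Tm z) = frac_part z" by (simp add: Tm_def)
  have b': "agree (M + 2 * sig z 0) (frac_part z) (inverse (conv (Tm z) n))"
    using b unfolding e1 by simp
  have "agree (M + 2 * sig z 0) z (conv z (Suc n))"
    by (rule agree_diff[OF b']) (simp add: poly_part_def)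
  then show ?case by (simp add: M_def SS_Suc' sig_Tm algebra_simps)
qed

lemma conv_Tm_sub:
  assumes "irr z" shows "conv (Tm z) n \<noteq> 0" "fls_subdegree (conv (Tm z) n) = - sig z 0"
proof -
  have irT: "irr (Tm z)" using assms by (rule irr_Tm)
  have a: "agree (SS (Tm z) n + sig (Tm z) n - 1) (Tm z) (conv (Tm z) n)" using SC[OF irT] .
  have M0: "0 \<le> SS (Tm z) n + sig (Tm z) n - 1" using SS_nonneg[OF irT, of n] sig_pos[OF irT, of n] by simp
  show "conv (Tm z) n \<noteq> 0" "fls_subdegree (conv (Tm z) n) = - sig z 0"
    using agree_same_subdeg[OF Tm_ne0[OF assms] Tm_subdeg a] M0 sig_pos[OF assms, of 0] by auto
qed

lemma TC: assumes "irr z" shows "Tm (conv z (Suc n)) = conv (Tm z) n"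
proof -
  let ?c = "conv (Tm z) n"
  have sd: "fls_subdegree (inverse ?c) = sig z 0" using conv_Tm_sub[OF assms] by simp
  have "frac_part (poly_part z + inverse ?c) = inverse ?c"
  proof (rule fls_eqI)
    fix i show "frac_part (poly_part z + inverse ?c) $$ i = inverse ?c $$ i"
    proof (cases "1 \<le> i")
      case True then show ?thesis by (simp add: frac_nth poly_part_nth)
    next
      case False
      then have "inverse ?c $$ i = 0" using sd sig_pos[OF assms, of 0] by (intro fls_eq0_below_subdegree) simp
      then show ?thesis using False by (simp add: frac_nth)
    qed
  qed
  then show ?thesis by (simp add: Tm_def)
qed

lemma CQC: "irr z \<Longrightarrow> cq (conv z n) n = poly_part (cq z n)"
proof (induction n arbitrary: z)
  case 0 then show ?case by simp
next
  case (Suc n)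
  have "cq (conv z (Suc n)) (Suc n) = cq (Tm (conv z (Suc n))) n" by (rule cq_Suc')
  also have "\<dots> = cq (conv (Tm z) n) n" using TC[OF Suc.prems] by simp
  also have "\<dots> = poly_part (cq (Tm z) n)" using Suc.IH[OF irr_Tm[OF Suc.prems]] .
  finally show ?case by (simp only: cq_Suc')
qed

lemma term_conv: "frac_part (cq z n) = 0 \<Longrightarrow> z = conv z n"
proof (induction n arbitrary: z)
  case 0
  then show ?case using poly_plus_frac[of z] by simp
next
  case (Suc n)
  then have "frac_part (cq (Tm z) n) = 0" by (simp only: cq_Suc')
  then have "Tm z = conv (Tm z) n" by (rule Suc.IH)
  then have "inverse (conv (Tm z) n) = frac_part z" by (metis Tm_def inverse_inverse_eq)
  then show ?case using poly_plus_frac[of z] by simp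
qed

lemma R_conv: "conv z n \<in> ratfuns"
  by (induction n arbitrary: z) (auto intro: R_add R_inverse R_poly_part)

lemma not_irr_rat: "\<not> irr z \<Longrightarrow> z \<in> ratfuns"
  unfolding irr_def using term_conv R_conv by metis

lemma sig_conv:
  assumes "irr z" "j < n"
  shows "frac_part (cq (conv z n) j) \<noteq> 0" "sig (conv z n) j = sig z j"
proof -
  have "\<forall>j<n. frac_part (cq z j) \<noteq> 0 \<and> SS z j + sig z j \<le> SS z n + sig z n - 1"
  proof (intro allI impI conjI)
    fix j assume "j < n"
    show "frac_part (cq z j) \<noteq> 0" using assms(1) unfolding irr_def by blast
    show "SS z j + sig z j \<le> SS z n + sig z n - 1"
      using cond_lt[OF assms(1) \<open>j < n\<close>] sig_pos[OF assms(1), of n] by linarith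
  qed
  from fwd[OF SC[OF assms(1)] this] assms(2)
  show "frac_part (cq (conv z n) j) \<noteq> 0" "sig (conv z n) j = sig z j" by auto
qed

lemma SS_cong: "(\<And>j. j < n \<Longrightarrow> sig y j = sig z j) \<Longrightarrow> SS y n = SS z n"
  unfolding SS_def by (metis lessThan_iff sum.cong)

lemma pqdeg_Suc:
  assumes "frac_part (cq z i) \<noteq> 0" shows "pqdeg z (Suc i) = sig z i"
proof -
  let ?f = "frac_part (cq z i)"
  have s1: "1 \<le> fls_subdegree ?f" using frac_sub_ge1[OF assms] .
  have inz: "inverse ?f \<noteq> 0" using assms by simp
  have "fls_subdegree (poly_part (inverse ?f)) = - fls_subdegree ?f"
  proof (rule fls_subdegree_eqI)
    have "inverse ?f $$ fls_subdegree (inverse ?f) \<noteq> 0"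
      using inz by (rule nth_fls_subdegree_nonzero)
    then have "inverse ?f $$ (- fls_subdegree ?f) \<noteq> 0" by simp
    then show "poly_part (inverse ?f) $$ (- fls_subdegree ?f) \<noteq> 0"
      using s1 by (simp add: poly_part_nth)
  next
    fix k assume "k < - fls_subdegree ?f"
    then show "poly_part (inverse ?f) $$ k = 0" by (simp add: poly_part_nth)
  qed
  then show ?thesis by (simp add: pqdeg_def pq_def tdeg_def sig_def)
qed


fun zs :: "'a::field fls \<Rightarrow> nat \<Rightarrow> 'a fls" where
  "zs a 0 = a"
| "zs a (Suc k) = a - conv (zs a k) (k div 2)"

definition AA :: "'a::field fls \<Rightarrow> nat \<Rightarrow> int" where
  "AA a k = SS (zs a k) (k div 2)"

definition DD :: "'a::field fls \<Rightarrow> nat \<Rightarrow> int" where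
  "DD a k = AA a k + sig (zs a k) (k div 2)"

definition ee :: "'a::field fls \<Rightarrow> nat \<Rightarrow> int" where
  "ee a k = DD a (Suc k) - AA a k"

definition bco :: "'a::field fls \<Rightarrow> int \<Rightarrow> 'a" where
  "bco a i = zs a (2 * nat (i + 1)) $$ i"

context
  fixes a :: "'a::field fls"
  assumes na: "a \<notin> ratfuns"
begin

lemma irr_zs: "irr (zs a k)"
proof (cases k)
  case 0
  then show ?thesis using na not_irr_rat by auto
next
  case (Suc k')
  show ?thesis
  proof (rule ccontr)
    assume "\<not> irr (zs a k)"
    then have "zs a k \<in> ratfuns" by (rule not_irr_rat)
    then have "zs a k + conv (zs a k') (k' div 2) \<in> ratfuns" by (intro R_add R_conv)
    then show False using na Suc by simp
  qed
qed

lemma agree_step: "agree (DD a (Suc k) - 1) (zs a (Suc (Suc k))) (conv (zs a k) (k div 2))"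
proof -
  have "agree (DD a (Suc k) - 1) (zs a (Suc k)) (conv (zs a (Suc k)) (Suc k div 2))"
    using SC[OF irr_zs[of "Suc k"]] by (simp add: DD_def AA_def)
  then show ?thesis by (rule agree_diff) simp
qed

lemma step:
  assumes "1 \<le> ee a k"
  shows "\<forall>j<k div 2. sig (zs a (Suc (Suc k))) j = sig (zs a k) j"
    and "ee a k \<le> sig (zs a (Suc (Suc k))) (k div 2)"
proof -
  define z where "z = zs a k"
  define n where "n = k div 2"
  define c where "c = conv z n"
  define y where "y = zs a (Suc (Suc k))"
  define N where "N = DD a (Suc k) - 1"
  have iz: "irr z" unfolding z_def by (rule irr_zs)
  have ag: "agree N c y" unfolding N_def c_def y_def z_def n_def by (rule agree_sym[OF agree_step])
  have sc: "\<forall>j<n. frac_part (cq c j) \<noteq> 0 \<and> sig c j = sig z j"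
    unfolding c_def using sig_conv[OF iz] by blast
  have SSc: "\<And>j. j \<le> n \<Longrightarrow> SS c j = SS z j"
    using sc by (intro SS_cong) auto
  have AAk: "AA a k = SS z n" unfolding AA_def z_def n_def ..
  have NN: "N = ee a k + AA a k - 1" unfolding N_def ee_def by simp
  have conds: "\<forall>j<n. frac_part (cq c j) \<noteq> 0 \<and> SS c j + sig c j \<le> N"
  proof (intro allI impI conjI)
    fix j assume j: "j < n"
    show "frac_part (cq c j) \<noteq> 0" using sc j by blast
    have "SS z j + sig z j \<le> SS z n - 1" by (rule cond_lt[OF iz j])
    then show "SS c j + sig c j \<le> N" using sc j SSc[of j] NN AAk assms by simp
  qed
  note F = fwd[OF ag conds]
  show "\<forall>j<k div 2. sig (zs a (Suc (Suc k))) j = sig (zs a k) j"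
    using F sc unfolding y_def z_def n_def by auto
  have ag2: "agree (ee a k - 1) (poly_part (cq z n)) (cq y n)"
    using F CQC[OF iz, of n] SSc[of n] NN AAk unfolding c_def by simp
  have fnz: "frac_part (cq y n) \<noteq> 0" using irr_zs[of "Suc (Suc k)"] unfolding y_def irr_def by blast
  have "ee a k \<le> fls_subdegree (frac_part (cq y n))"
  proof (rule fls_subdegree_geI[OF fnz])
    fix i assume i: "i < ee a k"
    show "frac_part (cq y n) $$ i = 0"
    proof (cases "1 \<le> i")
      case True
      then have "cq y n $$ i = poly_part (cq z n) $$ i" using ag2 i unfolding agree_def by simp
      then show ?thesis using True by (simp add: frac_nth poly_part_nth)
    next
      case False then show ?thesis by (simp add: frac_nth)
    qed
  qed
  then show "ee a k \<le> sig (zs a (Suc (Suc k))) (k div 2)"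
    unfolding sig_def y_def n_def .
qed

lemma AA_nonneg: "0 \<le> AA a k"
  unfolding AA_def by (rule SS_nonneg[OF irr_zs])

lemma ee_growth:
  assumes "1 \<le> ee a k" shows "ee a k + 2 \<le> ee a (Suc k)"
proof -
  let ?n = "k div 2"
  have s1: "\<forall>j<?n. sig (zs a (Suc (Suc k))) j = sig (zs a k) j" by (rule step(1)[OF assms])
  have s2: "ee a k \<le> sig (zs a (Suc (Suc k))) ?n" by (rule step(2)[OF assms])
  have d: "Suc (Suc k) div 2 = Suc ?n" by simp
  have "SS (zs a (Suc (Suc k))) ?n = SS (zs a k) ?n" using s1 by (intro SS_cong) auto
  then have A2: "AA a (Suc (Suc k)) = AA a k + 2 * sig (zs a (Suc (Suc k))) ?n"
    unfolding AA_def d SS_Suc by simp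
  have D2: "AA a (Suc (Suc k)) + 1 \<le> DD a (Suc (Suc k))"
    unfolding DD_def using sig_pos[OF irr_zs[of "Suc (Suc k)"], of "Suc (Suc k) div 2"] by linarith
  have t: "1 \<le> sig (zs a (Suc k)) (Suc k div 2)" using sig_pos[OF irr_zs[of "Suc k"]] by blast
  have e1: "ee a k = AA a (Suc k) + sig (zs a (Suc k)) (Suc k div 2) - AA a k"
    unfolding ee_def DD_def by simp
  show ?thesis unfolding ee_def[of a "Suc k"] using A2 D2 t e1 s2 by simp
qed

lemma ee_0: "1 \<le> ee a 0"
  unfolding ee_def DD_def AA_def using sig_pos[OF irr_zs, of "Suc 0" 0] by (simp add: SS_def)

lemma ee_lower: "2 * int k + 1 \<le> ee a k"
proof (induction k)
  case 0 then show ?case using ee_0 by simp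
next
  case (Suc k)
  then show ?case using ee_growth[of k] by simp
qed

lemma sig_stable: "j < k div 2 \<Longrightarrow> sig (zs a (k + 2 * m)) j = sig (zs a k) j"
proof (induction m)
  case 0 then show ?case by simp
next
  case (Suc m)
  have "j < (k + 2 * m) div 2" using Suc.prems by simp
  then have "sig (zs a (Suc (Suc (k + 2 * m)))) j = sig (zs a (k + 2 * m)) j"
    using step(1)[OF order_trans[OF _ ee_lower], of "k + 2 * m"] by simp
  then show ?case using Suc by simp
qed

lemma DD_lower: "int k \<le> DD a k"
proof (cases k)
  case 0 then show ?thesis unfolding DD_def using AA_nonneg[of 0] sig_pos[OF irr_zs[of 0], of 0] by simp
next
  case (Suc k')
  then show ?thesis using ee_lower[of k'] AA_nonneg[of k'] unfolding ee_def by simp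
qed

lemma agree_zs2: "agree (int k - 1) (zs a (Suc (Suc k))) (zs a k)"
proof -
  have 1: "agree (DD a k - 1) (zs a k) (conv (zs a k) (k div 2))"
    using SC[OF irr_zs[of k]] by (simp add: DD_def AA_def)
  have 2: "agree (DD a (Suc k) - 1) (zs a (Suc (Suc k))) (conv (zs a k) (k div 2))"
    by (rule agree_step)
  show ?thesis
    using agree_trans[OF agree_mono[OF 2] agree_sym[OF agree_mono[OF 1]]]
      DD_lower[of k] DD_lower[of "Suc k"] by simp
qed

lemma zs_nth_stable: "i < int k \<Longrightarrow> zs a (k + 2 * m) $$ i = zs a k $$ i"
proof (induction m)
  case 0 then show ?case by simp
next
  case (Suc m)
  have "agree (int (k + 2 * m) - 1) (zs a (Suc (Suc (k + 2 * m)))) (zs a (k + 2 * m))"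
    by (rule agree_zs2)
  then have "zs a (Suc (Suc (k + 2 * m))) $$ i = zs a (k + 2 * m) $$ i"
    using Suc.prems unfolding agree_def by simp
  then show ?case using Suc by simp
qed

lemma bco_eq: "i < int (2 * j) \<Longrightarrow> zs a (2 * j) $$ i = bco a i"
proof -
  assume i: "i < int (2 * j)"
  define K where "K = nat (i + 1)"
  have iK: "i < int (2 * K)" unfolding K_def by linarith
  show ?thesis
  proof (cases "K \<le> j")
    case True
    then have eq: "2 * j = 2 * K + 2 * (j - K)" by simp
    have "zs a (2 * j) $$ i = zs a (2 * K + 2 * (j - K)) $$ i" by (subst eq) (rule refl)
    also have "\<dots> = zs a (2 * K) $$ i" by (rule zs_nth_stable[OF iK])
    finally show ?thesis unfolding bco_def K_def .
  next
    case False
    then have eq: "2 * K = 2 * j + 2 * (K - j)" by simp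
    have "zs a (2 * K) $$ i = zs a (2 * j + 2 * (K - j)) $$ i" by (subst eq) (rule refl)
    also have "\<dots> = zs a (2 * j) $$ i" by (rule zs_nth_stable[OF i])
    finally show ?thesis unfolding bco_def K_def by simp
  qed
qed

lemma bco_low: "i < min 0 (fls_subdegree a) \<Longrightarrow> bco a i = 0"
proof -
  assume "i < min 0 (fls_subdegree a)"
  then have "nat (i + 1) = 0" "i < fls_subdegree a" by auto
  then show ?thesis unfolding bco_def by simp
qed

definition bet :: "'a fls" where "bet = Abs_fls (bco a)"

lemma bet_nth: "bet $$ i = bco a i"
  unfolding bet_def by (rule nth_Abs_fls_lower_bound) (use bco_low in blast)

lemma agree_bet: "agree (int (2 * j) - 1) bet (zs a (2 * j))"
  unfolding agree_def using bco_eq by (simp add: bet_nth)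

lemma agree_gam: "agree (int (2 * j) - 1) (a - bet) (zs a (Suc (2 * j)))"
proof -
  have 1: "agree (DD a (2 * j) - 1) (zs a (2 * j)) (conv (zs a (2 * j)) j)"
    using SC[OF irr_zs[of "2 * j"]] by (simp add: DD_def AA_def)
  have 2: "agree (int (2 * j) - 1) (zs a (2 * j)) bet"
    using agree_sym[OF agree_bet] .
  have h1: "agree (int (2 * j) - 1) (conv (zs a (2 * j)) j - zs a (2 * j)) 0"
    using agree_sym[OF agree_mono[OF 1]] DD_lower[of "2 * j"] agree_0_iff[of _ "conv (zs a (2 * j)) j" "zs a (2 * j)"] by simp
  have h2: "agree (int (2 * j) - 1) (zs a (2 * j) - bet) 0"
    using 2 agree_0_iff[of _ "zs a (2 * j)" bet] by simp
  have "agree (int (2 * j) - 1) ((conv (zs a (2 * j)) j - zs a (2 * j)) + (zs a (2 * j) - bet)) 0"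
    using agree_add_sum[OF h1 h2] by simp
  then show ?thesis by (rule agree_diff) simp
qed

end


lemma lim_from_lower:
  fixes f :: "nat \<Rightarrow> int"
  assumes "\<And>i. int i \<le> f (Suc i)"
  shows "filterlim f at_top sequentially"
  unfolding filterlim_at_top eventually_sequentially
proof
  fix Z :: int
  show "\<exists>N. \<forall>n\<ge>N. Z \<le> f n"
  proof (intro exI allI impI)
    fix n assume n: "Suc (nat Z) \<le> n"
    then obtain i where i: "n = Suc i" "nat Z \<le> i" by (cases n) auto
    have "Z \<le> int i" using i(2) by linarith
    then show "Z \<le> f n" using assms[of i] i(1) by simp
  qed
qed

context
  fixes a :: "'a::field fls"
  assumes na: "a \<notin> ratfuns"
begin

lemma main_gen:
  fixes y :: "'a fls" and K :: nat and i :: nat and m :: nat and P :: int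
  assumes KK: "K div 2 = Suc i"
    and ag: "agree P (zs a (K + 2 * m)) y"
    and big: "AA a K \<le> P"
  shows "frac_part (cq y i) \<noteq> 0" "sig y i = sig (zs a K) i"
proof -
  define z where "z = zs a (K + 2 * m)"
  have iz: "irr z" unfolding z_def by (rule irr_zs[OF na])
  have stab: "\<And>j. j < Suc i \<Longrightarrow> sig z j = sig (zs a K) j"
    unfolding z_def using sig_stable[OF na] KK by simp
  have SSe: "SS z (Suc i) = AA a K"
    unfolding AA_def KK using stab by (intro SS_cong) auto
  have conds: "\<forall>j<Suc i. frac_part (cq z j) \<noteq> 0 \<and> SS z j + sig z j \<le> P"
  proof (intro allI impI conjI)
    fix j assume j: "j < Suc i"
    show "frac_part (cq z j) \<noteq> 0" using iz unfolding irr_def by blast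
    show "SS z j + sig z j \<le> P"
      using cond_lt[OF iz j] SSe big by simp
  qed
  have F: "\<forall>j<Suc i. frac_part (cq y j) \<noteq> 0 \<and> sig y j = sig z j"
    using fwd[OF ag[folded z_def] conds] by blast
  then show "frac_part (cq y i) \<noteq> 0" "sig y i = sig (zs a K) i" using stab by auto
qed

lemma bet_big: "int i \<le> pqdeg (bet a) (Suc i)"
proof -
  define K where "K = 2 * Suc i"
  define m where "m = nat (AA a K)"
  have KK: "K div 2 = Suc i" unfolding K_def by simp
  have e: "K + 2 * m = 2 * (Suc i + m)" unfolding K_def by simp
  have ag: "agree (int (K + 2 * m) - 1) (zs a (K + 2 * m)) (bet a)"
    unfolding e by (rule agree_sym[OF agree_bet[OF na]])
  have big: "AA a K \<le> int (K + 2 * m) - 1" unfolding m_def K_def by simp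
  note M = main_gen[OF KK ag big]
  have h: "1 \<le> ee a (2 * i)" using ee_lower[OF na, of "2 * i"] by simp
  have K2: "K = Suc (Suc (2 * i))" unfolding K_def by simp
  have s: "ee a (2 * i) \<le> sig (zs a K) (2 * i div 2)" unfolding K2 by (rule step(2)[OF na h])
  have d: "2 * i div 2 = i" by simp
  have "ee a (2 * i) \<le> sig (zs a K) i" using s by (simp only: d)
  then have "ee a (2 * i) \<le> sig (bet a) i" using M(2) by simp
  then show ?thesis using ee_lower[OF na, of "2 * i"] pqdeg_Suc[OF M(1)] by simp
qed

lemma gam_big: "int i \<le> pqdeg (a - bet a) (Suc i)"
proof -
  define K where "K = Suc (2 * Suc i)"
  define m where "m = nat (AA a K)"
  have KK: "K div 2 = Suc i" unfolding K_def by simp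
  have e: "K + 2 * m = Suc (2 * (Suc i + m))" unfolding K_def by simp
  have ag0: "agree (int (2 * (Suc i + m)) - 1) (zs a (Suc (2 * (Suc i + m)))) (a - bet a)"
    by (rule agree_sym[OF agree_gam[OF na]])
  have ag: "agree (int (2 * (Suc i + m)) - 1) (zs a (K + 2 * m)) (a - bet a)"
    unfolding e by (rule ag0)
  have big: "AA a K \<le> int (2 * (Suc i + m)) - 1" unfolding m_def by simp
  note M = main_gen[OF KK ag big]
  have h: "1 \<le> ee a (Suc (2 * i))" using ee_lower[OF na, of "Suc (2 * i)"] by simp
  have K2: "K = Suc (Suc (Suc (2 * i)))" unfolding K_def by simp
  have s: "ee a (Suc (2 * i)) \<le> sig (zs a K) (Suc (2 * i) div 2)" unfolding K2 by (rule step(2)[OF na h])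
  have d: "Suc (2 * i) div 2 = i" by simp
  have "ee a (Suc (2 * i)) \<le> sig (zs a K) i" using s by (simp only: d)
  then have "ee a (Suc (2 * i)) \<le> sig (a - bet a) i" using M(2) by simp
  then show ?thesis using ee_lower[OF na, of "Suc (2 * i)"] pqdeg_Suc[OF M(1)] by simp
qed

end

theorem theorem1p3:
  "{\<alpha> + \<beta> | \<alpha> \<beta>. \<alpha> \<in> (Gset :: 'a::field fls set) \<and> \<beta> \<in> Gset} = UNIV"
proof (intro set_eqI iffI)
  fix x :: "'a fls"
  show "x \<in> {\<alpha> + \<beta> | \<alpha> \<beta>. \<alpha> \<in> (Gset :: 'a::field fls set) \<and> \<beta> \<in> Gset}"
  proof (cases "x \<in> ratfuns")
    case True
    then have "x \<in> Gset" "0 \<in> Gset" using R_zero unfolding Gset_def by auto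
    then show ?thesis by force
  next
    case False
    have "bet x \<in> Gset" unfolding Gset_def
      using lim_from_lower[OF bet_big[OF False]] by blast
    moreover have "x - bet x \<in> Gset" unfolding Gset_def
      using lim_from_lower[OF gam_big[OF False]] by blast
    moreover have "x = bet x + (x - bet x)" by simp
    ultimately show ?thesis by blast
  qed
qed simp

end
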